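(* For every positive integer $t$ there exist constants $\alpha,\beta,\gamma>0$ such that the following holds. Let $s$ be a positive integer and $n\geq 2$ an integer, and let $G$ be a quasi-comparability graph of complexity $t$ on $n$ vertices that contains no clique of size $s$. Then $$\chi(G)\leq \alpha s^{\beta}(\log n)^{\gamma}.$$
   Context: For $\mathbf{x},\mathbf{y}\in\mathbb{R}^t$ write $\mathbf{x}\prec\mathbf{y}$ if $\mathbf{x}(i)<\mathbf{y}(i)$ for every $i\in[t]$. A quasi-comparability graph of complexity $t$ is a finite simple graph $G$ with $V(G)\subset\mathbb{R}^t\times\mathbb{R}^t$ in which distinct vertices $(\mathbf{x},\mathbf{y})$ and $(\mathbf{x}',\mathbf{y}')$ are adjacent iff $\mathbf{x}\prec\mathbf{y}'$ or $\mathbf{x}'\prec\mathbf{y}$. $\chi(G)$ is the chromatic number. *)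

theory Defs
  imports "HOL-Analysis.Analysis"
begin

text \<open>Strict coordinatewise order on R^t (index type 't, t = CARD('t)).\<close>
definition vprec :: "real^'t \<Rightarrow> real^'t \<Rightarrow> bool" where
  "vprec x y \<longleftrightarrow> (\<forall>i. x $ i < y $ i)"

definition qc_adj :: "((real^'t) \<times> (real^'t)) \<Rightarrow> ((real^'t) \<times> (real^'t)) \<Rightarrow> bool" where
  "qc_adj u v \<longleftrightarrow> u \<noteq> v \<and> (vprec (fst u) (snd v) \<or> vprec (fst v) (snd u))"

definition is_clique :: "('a \<Rightarrow> 'a \<Rightarrow> bool) \<Rightarrow> 'a set \<Rightarrow> bool" where
  "is_clique E K \<longleftrightarrow> (\<forall>u\<in>K. \<forall>v\<in>K. u \<noteq> v \<longrightarrow> E u v)"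

definition proper_colouring :: "('a \<Rightarrow> 'a \<Rightarrow> bool) \<Rightarrow> 'a set \<Rightarrow> ('a \<Rightarrow> nat) \<Rightarrow> nat \<Rightarrow> bool" where
  "proper_colouring E V c k \<longleftrightarrow>
     (\<forall>v\<in>V. c v < k) \<and> (\<forall>u\<in>V. \<forall>v\<in>V. E u v \<longrightarrow> c u \<noteq> c v)"

definition chromatic_number :: "('a \<Rightarrow> 'a \<Rightarrow> bool) \<Rightarrow> 'a set \<Rightarrow> nat" where
  "chromatic_number E V = (LEAST k. \<exists>c. proper_colouring E V c k)"

end

theory Submission
  imports Defs
begin

definition symr :: "('a \<Rightarrow> 'a \<Rightarrow> bool) \<Rightarrow> 'a \<Rightarrow> 'a \<Rightarrow> bool" where
  "symr R u v \<longleftrightarrow> u \<noteq> v \<and> (R u v \<or> R v u)"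

definition cfree :: "('a \<Rightarrow> 'a \<Rightarrow> bool) \<Rightarrow> 'a set \<Rightarrow> nat \<Rightarrow> bool" where
  "cfree E V s \<longleftrightarrow> \<not> (\<exists>K\<subseteq>V. card K = s \<and> is_clique E K)"

definition colourable :: "('a \<Rightarrow> 'a \<Rightarrow> bool) \<Rightarrow> 'a set \<Rightarrow> nat \<Rightarrow> bool" where
  "colourable E V k \<longleftrightarrow> (\<exists>c. proper_colouring E V c k)"

lemma colourable_mono_k: assumes "colourable E V k" "k \<le> k'" shows "colourable E V k'"
proof -
  obtain c where c: "proper_colouring E V c k" using assms(1) unfolding colourable_def by blast
  have "proper_colouring E V c k'" using c assms(2) unfolding proper_colouring_def
    by (meson order_less_le_trans)
  then show ?thesis unfolding colourable_def by blast
qed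

lemma colourable_sub: assumes "colourable E V k" "W \<subseteq> V" "\<And>u v. u \<in> W \<Longrightarrow> v \<in> W \<Longrightarrow> E' u v \<Longrightarrow> E u v"
  shows "colourable E' W k"
proof -
  obtain c where c: "proper_colouring E V c k" using assms(1) unfolding colourable_def by blast
  have "proper_colouring E' W c k" using c assms(2,3) unfolding proper_colouring_def
    by (simp add: subset_iff)
  then show ?thesis unfolding colourable_def by blast
qed

lemma colourable_empty: "colourable E {} 0"
  unfolding colourable_def proper_colouring_def by auto

lemma colourable_union: "colourable E V1 k1 \<Longrightarrow> colourable E V2 k2 \<Longrightarrow> colourable E (V1 \<union> V2) (k1 + k2)"
proof -
  assume "colourable E V1 k1" "colourable E V2 k2"
  then obtain c1 c2 where c1: "proper_colouring E V1 c1 k1" and c2: "proper_colouring E V2 c2 k2"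
    unfolding colourable_def by blast
  define c where "c v = (if v \<in> V1 then c1 v else k1 + c2 v)" for v
  have "proper_colouring E (V1 \<union> V2) c (k1 + k2)"
    unfolding proper_colouring_def
  proof (intro conjI ballI impI)
    fix v assume "v \<in> V1 \<union> V2" then show "c v < k1 + k2" using c1 c2 unfolding proper_colouring_def c_def by auto
  next
    fix u v assume uv: "u \<in> V1 \<union> V2" "v \<in> V1 \<union> V2" "E u v"
    show "c u \<noteq> c v"
    proof (cases "u \<in> V1")
      case True
      then show ?thesis
      proof (cases "v \<in> V1")
        case True
        then show ?thesis using c1 uv \<open>u \<in> V1\<close> unfolding proper_colouring_def c_def by auto
      next
        case False
        then have "c v \<ge> k1" "c u < k1" using c1 \<open>u \<in> V1\<close> unfolding c_def proper_colouring_def by auto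
        then show ?thesis by auto
      qed
    next
      case False
      then show ?thesis
      proof (cases "v \<in> V1")
        case True
        then have "c u \<ge> k1" "c v < k1" using c1 \<open>u \<notin> V1\<close> unfolding c_def proper_colouring_def by auto
        then show ?thesis by auto
      next
        case False
        then show ?thesis using c2 uv \<open>u \<notin> V1\<close> unfolding proper_colouring_def c_def by auto
      qed
    qed
  qed
  then show ?thesis unfolding colourable_def by blast
qed

lemma colourable_sep: "colourable E V1 k \<Longrightarrow> colourable E V2 k \<Longrightarrow>
   (\<And>u v. u \<in> V1 \<Longrightarrow> v \<in> V2 \<Longrightarrow> \<not> E u v \<and> \<not> E v u) \<Longrightarrow> colourable E (V1 \<union> V2) k"
proof -
  assume "colourable E V1 k" "colourable E V2 k" and sep: "(\<And>u v. u \<in> V1 \<Longrightarrow> v \<in> V2 \<Longrightarrow> \<not> E u v \<and> \<not> E v u)"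
  then obtain c1 c2 where c1: "proper_colouring E V1 c1 k" and c2: "proper_colouring E V2 c2 k"
    unfolding colourable_def by blast
  define c where "c v = (if v \<in> V1 then c1 v else c2 v)" for v
  have "proper_colouring E (V1 \<union> V2) c k"
    unfolding proper_colouring_def
  proof (intro conjI ballI impI)
    fix v assume "v \<in> V1 \<union> V2" then show "c v < k" using c1 c2 unfolding proper_colouring_def c_def by auto
  next
    fix u v assume uv: "u \<in> V1 \<union> V2" "v \<in> V1 \<union> V2" "E u v"
    show "c u \<noteq> c v"
    proof (cases "u \<in> V1")
      case True
      then show ?thesis
      proof (cases "v \<in> V1")
        case True
        then show ?thesis using c1 uv \<open>u \<in> V1\<close> unfolding proper_colouring_def c_def by auto
      next
        case False
        then show ?thesis using sep[of u v] uv \<open>u \<in> V1\<close> by auto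
      qed
    next
      case False
      then show ?thesis
      proof (cases "v \<in> V1")
        case True
        then show ?thesis using sep[of v u] uv \<open>u \<notin> V1\<close> by auto
      next
        case False
        then show ?thesis using c2 uv \<open>u \<notin> V1\<close> unfolding proper_colouring_def c_def by auto
      qed
    qed
  qed
  then show ?thesis unfolding colourable_def by blast
qed

lemma colourable_prod: "colourable E1 V k1 \<Longrightarrow> colourable E2 V k2 \<Longrightarrow>
   (\<And>u v. u \<in> V \<Longrightarrow> v \<in> V \<Longrightarrow> E u v \<Longrightarrow> E1 u v \<or> E2 u v) \<Longrightarrow> colourable E V (k1 * k2)"
proof -
  assume "colourable E1 V k1" "colourable E2 V k2" and sub: "(\<And>u v. u \<in> V \<Longrightarrow> v \<in> V \<Longrightarrow> E u v \<Longrightarrow> E1 u v \<or> E2 u v)"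
  then obtain c1 c2 where c1: "proper_colouring E1 V c1 k1" and c2: "proper_colouring E2 V c2 k2"
    unfolding colourable_def by blast
  define c where "c v = c1 v * k2 + c2 v" for v
  have inj: "c u = c v \<Longrightarrow> u \<in> V \<Longrightarrow> v \<in> V \<Longrightarrow> c1 u = c1 v \<and> c2 u = c2 v" for u v
  proof -
    assume "c u = c v" "u \<in> V" "v \<in> V"
    then have "c2 u < k2" "c2 v < k2" using c2 unfolding proper_colouring_def by auto
    then have "(c1 u * k2 + c2 u) div k2 = c1 u" "(c1 v * k2 + c2 v) div k2 = c1 v"
      "(c1 u * k2 + c2 u) mod k2 = c2 u" "(c1 v * k2 + c2 v) mod k2 = c2 v" by auto
    then show ?thesis using \<open>c u = c v\<close> unfolding c_def by simp
  qed
  have bd: "c v < k1 * k2" if "v \<in> V" for v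
  proof -
    have "c1 v < k1" "c2 v < k2" using c1 c2 that unfolding proper_colouring_def by auto
    then have "c1 v + 1 \<le> k1" by simp
    then have "(c1 v + 1) * k2 \<le> k1 * k2" by (rule mult_right_mono) simp
    then show ?thesis unfolding c_def using \<open>c2 v < k2\<close> by (simp add: algebra_simps)
  qed
  have "proper_colouring E V c (k1 * k2)"
    unfolding proper_colouring_def
  proof (intro conjI ballI impI)
    fix v assume "v \<in> V" then show "c v < k1 * k2" by (rule bd)
  next
    fix u v assume uv: "u \<in> V" "v \<in> V" "E u v"
    show "c u \<noteq> c v"
    proof
      assume "c u = c v"
      with inj uv have "c1 u = c1 v" "c2 u = c2 v" by blast+
      moreover from sub uv have "E1 u v \<or> E2 u v" by blast
      ultimately show False using c1 c2 uv unfolding proper_colouring_def by blast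
    qed
  qed
  then show ?thesis unfolding colourable_def by blast
qed

lemma cfree_sub: assumes "cfree E V s" "W \<subseteq> V" "\<And>u v. u \<in> W \<Longrightarrow> v \<in> W \<Longrightarrow> E' u v \<Longrightarrow> E u v"
  shows "cfree E' W s"
  unfolding cfree_def is_clique_def
proof
  assume "\<exists>K\<subseteq>W. card K = s \<and> (\<forall>u\<in>K. \<forall>v\<in>K. u \<noteq> v \<longrightarrow> E' u v)"
  then obtain K where K: "K \<subseteq> W" "card K = s" "\<forall>u\<in>K. \<forall>v\<in>K. u \<noteq> v \<longrightarrow> E' u v" by blast
  then have "K \<subseteq> V" "\<forall>u\<in>K. \<forall>v\<in>K. u \<noteq> v \<longrightarrow> E u v" using assms(2,3) by blast+
  then show False using assms(1) K(2) unfolding cfree_def is_clique_def by blast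
qed

lemma cfree_card: assumes a: "cfree E V s" "C \<subseteq> V" "is_clique E C" shows "card C < s"
proof (rule ccontr)
  assume "\<not> card C < s"
  then have "s \<le> card C" by simp
  then obtain K where K: "K \<subseteq> C" "card K = s" by (rule obtain_subset_with_card_n)
  have "K \<subseteq> V" using K(1) a(2) by (rule subset_trans)
  moreover have "is_clique E K" using a(3) K(1) unfolding is_clique_def by (simp add: subset_iff)
  ultimately show False using a(1) K(2) unfolding cfree_def by blast
qed

lemma cfree_pos: "cfree E V s \<Longrightarrow> s \<ge> 1"
proof (rule ccontr)
  assume "cfree E V s" "\<not> s \<ge> 1"
  then have "s = 0" by simp
  moreover have "{} \<subseteq> V" "card {} = (0::nat)" "is_clique E {}" unfolding is_clique_def by auto
  ultimately show False using \<open>cfree E V s\<close> unfolding cfree_def by blast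
qed

lemma median_exists:
  fixes a b :: "'a \<Rightarrow> real"
  assumes fin: "finite V" and ne: "V \<noteq> {}" and ab: "\<forall>u\<in>V. a u < b u"
  shows "\<exists>m. 2 * card {u\<in>V. b u \<le> m} \<le> card V \<and> 2 * card {u\<in>V. m < a u} \<le> card V"
proof -
  define S where "S = {r \<in> a ` V. card V \<le> 2 * card {u\<in>V. a u \<le> r}}"
  have finS: "finite S" unfolding S_def using fin by simp
  define r0 where "r0 = Max (a ` V)"
  have "r0 \<in> a ` V" unfolding r0_def using fin ne by simp
  moreover have "{u\<in>V. a u \<le> r0} = V" unfolding r0_def using fin by auto
  ultimately have "r0 \<in> S" unfolding S_def by simp
  then have neS: "S \<noteq> {}" by blast
  define m where "m = Min S"
  have mS: "m \<in> S" unfolding m_def using finS neS by simp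
  have minS: "\<And>r. r \<in> S \<Longrightarrow> m \<le> r" unfolding m_def using finS by simp
  have c1: "card V \<le> 2 * card {u\<in>V. a u \<le> m}" using mS unfolding S_def by simp
  have "{u\<in>V. m < a u} = V - {u\<in>V. a u \<le> m}" by auto
  then have "card {u\<in>V. m < a u} = card V - card {u\<in>V. a u \<le> m}"
    using fin by (simp add: card_Diff_subset)
  moreover have "card {u\<in>V. a u \<le> m} \<le> card V" using fin by (simp add: card_mono)
  ultimately have part2: "2 * card {u\<in>V. m < a u} \<le> card V" using c1 by simp
  define A where "A = {u\<in>V. a u < m}"
  have "2 * card A \<le> card V"
  proof (rule ccontr)
    assume "\<not> 2 * card A \<le> card V"
    then have big: "card V < 2 * card A" by simp
    then have "A \<noteq> {}" by auto
    have finA: "finite A" unfolding A_def using fin by simp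
    define r' where "r' = Max (a ` A)"
    have "r' \<in> a ` A" unfolding r'_def using finA \<open>A \<noteq> {}\<close> by simp
    then have r'V: "r' \<in> a ` V" and r'm: "r' < m" unfolding A_def by auto
    have "A \<subseteq> {u\<in>V. a u \<le> r'}" unfolding r'_def using finA A_def by auto
    then have "card A \<le> card {u\<in>V. a u \<le> r'}" using fin by (simp add: card_mono)
    then have "r' \<in> S" unfolding S_def using r'V big by simp
    then have "m \<le> r'" by (rule minS)
    then show False using r'm by simp
  qed
  moreover have "{u\<in>V. b u \<le> m} \<subseteq> A" unfolding A_def using ab by force
  then have "card {u\<in>V. b u \<le> m} \<le> card A" using fin unfolding A_def by (simp add: card_mono)
  ultimately have "2 * card {u\<in>V. b u \<le> m} \<le> card V" by simp
  then show ?thesis using part2 by blast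
qed

lemma mirsky:
  assumes fin: "finite V" and irr: "\<forall>u\<in>V. \<not> P u u"
    and tr: "\<forall>u\<in>V. \<forall>v\<in>V. \<forall>w\<in>V. P u v \<longrightarrow> P v w \<longrightarrow> P u w"
    and cf: "cfree (symr P) V s"
  shows "colourable (symr P) V s"
proof -
  define ch where "ch v = {C. C \<subseteq> V \<and> v \<in> C \<and> (\<forall>w\<in>C. w \<noteq> v \<longrightarrow> P w v) \<and> is_clique (symr P) C}" for v
  define h where "h v = Max (card ` ch v)" for v
  have finch: "finite (ch v)" for v
  proof -
    have "ch v \<subseteq> Pow V" unfolding ch_def by auto
    then show ?thesis using fin by (meson finite_Pow_iff finite_subset)
  qed
  have sing: "{v} \<in> ch v" if "v \<in> V" for v
    using that unfolding ch_def is_clique_def by auto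
  have hs: "h v < s" if "v \<in> V" for v
  proof -
    have "\<forall>C\<in>ch v. card C < s"
    proof
      fix C assume "C \<in> ch v"
      then have "C \<subseteq> V" "is_clique (symr P) C" unfolding ch_def by auto
      then show "card C < s" using cfree_card[OF cf] by blast
    qed
    moreover have "card ` ch v \<noteq> {}" using sing[OF that] by blast
    ultimately show ?thesis unfolding h_def using finch by simp
  qed
  have key: "h u < h v" if uv: "u \<in> V" "v \<in> V" "u \<noteq> v" "P u v" for u v
  proof -
    have "card ` ch u \<noteq> {}" using sing[OF uv(1)] by blast
    then have "h u \<in> card ` ch u" unfolding h_def using finch by simp
    then obtain C where C0: "C \<in> ch u" "h u = card C" by (rule imageE)
    then have C: "C \<in> ch u" "card C = h u" by simp_all
    have CV: "C \<subseteq> V" and uC: "u \<in> C" and below: "\<forall>w\<in>C. w \<noteq> u \<longrightarrow> P w u"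
      and cl: "is_clique (symr P) C" using C(1) unfolding ch_def by auto
    have vC: "v \<notin> C"
    proof
      assume "v \<in> C"
      then have "P v u" using below uv(3) by auto
      then have "P u u" using tr uv by blast
      then show False using irr uv by blast
    qed
    have belowv: "\<forall>w\<in>insert v C. w \<noteq> v \<longrightarrow> P w v"
    proof (intro ballI impI)
      fix w assume "w \<in> insert v C" "w \<noteq> v"
      then have wC: "w \<in> C" by simp
      show "P w v"
      proof (cases "w = u")
        case True then show ?thesis using uv by simp
      next
        case False
        then have "P w u" using below wC by simp
        moreover have "w \<in> V" using wC CV by blast
        ultimately show ?thesis using tr uv by blast
      qed
    qed
    have "is_clique (symr P) (insert v C)"
      unfolding is_clique_def
    proof (intro ballI impI)
      fix x y assume xy: "x \<in> insert v C" "y \<in> insert v C" "x \<noteq> y"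
      show "symr P x y"
      proof (cases "x = v")
        case True
        then have "y \<in> C" "y \<noteq> v" using xy by auto
        then show ?thesis using belowv True xy(3) unfolding symr_def by auto
      next
        case False
        then have xC: "x \<in> C" using xy by simp
        show ?thesis
        proof (cases "y = v")
          case True
          then show ?thesis using belowv xC xy(3) unfolding symr_def by auto
        next
          case False
          then have "y \<in> C" using xy by simp
          then show ?thesis using cl xC xy(3) unfolding is_clique_def by blast
        qed
      qed
    qed
    then have "insert v C \<in> ch v" using belowv CV uv(2) unfolding ch_def by auto
    then have "card (insert v C) \<le> h v" unfolding h_def using finch by simp
    moreover have "card (insert v C) = h u + 1"
      using vC C(2) CV fin by (simp add: finite_subset)
    ultimately show ?thesis by simp
  qed
  have "proper_colouring (symr P) V h s"
    unfolding proper_colouring_def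
  proof (intro conjI ballI impI)
    fix v assume "v \<in> V" then show "h v < s" by (rule hs)
  next
    fix u v assume uv: "u \<in> V" "v \<in> V" "symr P u v"
    then have "u \<noteq> v" "P u v \<or> P v u" unfolding symr_def by auto
    then show "h u \<noteq> h v" using key uv by (metis less_irrefl)
  qed
  then show ?thesis unfolding colourable_def by blast
qed

lemma complete_col:
  assumes fin: "finite V" and cl: "is_clique E V" and cf: "cfree E V s" and irr: "\<forall>u\<in>V. \<not> E u u"
  shows "colourable E V s"
proof -
  have "card V < s" using cfree_card[OF cf _ cl] by simp
  obtain f where f: "bij_betw f V {0..<card V}" using ex_bij_betw_finite_nat[OF fin] by blast
  have "proper_colouring E V f s"
    unfolding proper_colouring_def
  proof (intro conjI ballI impI)
    fix v assume "v \<in> V"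
    then have "f v < card V" using f unfolding bij_betw_def by auto
    then show "f v < s" using \<open>card V < s\<close> by simp
  next
    fix u v assume uv: "u \<in> V" "v \<in> V" "E u v"
    show "f u \<noteq> f v"
    proof
      assume "f u = f v"
      then have "u = v" using f uv unfolding bij_betw_def inj_on_def by blast
      then show False using uv irr by simp
    qed
  qed
  then show ?thesis unfolding colourable_def by blast
qed

lemma dc:
  fixes a b :: "'a \<Rightarrow> real" and K :: nat
  assumes "finite V" "\<forall>u\<in>V. a u < b u"
   "\<forall>u\<in>V. \<forall>v\<in>V. E u v \<longrightarrow> a u < b v \<and> a v < b u"
   "\<forall>W m. W \<subseteq> V \<and> (\<forall>u\<in>W. a u \<le> m \<and> m < b u) \<longrightarrow> colourable E W K"
  shows "\<exists>k. colourable E V k \<and> real k \<le> (if V = {} then 0 else K * (1 + log 2 (card V)))"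
  using assms
proof (induction "card V" arbitrary: V rule: less_induct)
  case less
  note fin = less.prems(1) and ab = less.prems(2) and Eab = less.prems(3) and hyp = less.prems(4)
  show ?case
  proof (cases "V = {}")
    case True
    then show ?thesis using colourable_empty by auto
  next
    case False
    define n where "n = card V"
    have n1: "n \<ge> 1" unfolding n_def using fin False by (simp add: Suc_leI card_gt_0_iff)
    obtain m where m: "2 * card {u\<in>V. b u \<le> m} \<le> card V" "2 * card {u\<in>V. m < a u} \<le> card V"
      using median_exists[OF fin False ab] by blast
    define L where "L = {u\<in>V. b u \<le> m}"
    define R where "R = {u\<in>V. m < a u}"
    define M where "M = {u\<in>V. a u \<le> m \<and> m < b u}"
    have VLRM: "V = M \<union> (L \<union> R)" unfolding L_def R_def M_def by auto
    have bound: "\<exists>k. colourable E X k \<and> real k \<le> K * log 2 n"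
      if X: "X \<subseteq> V" "2 * card X \<le> card V" for X
    proof -
      have cX: "card X < card V" using X(2) n1 unfolding n_def by simp
      have finX: "finite X" using X(1) fin by (rule finite_subset)
      have "\<exists>k. colourable E X k \<and> real k \<le> (if X = {} then 0 else K * (1 + log 2 (card X)))"
      proof (rule less.hyps[OF cX finX])
        show "\<forall>u\<in>X. a u < b u" using ab X(1) by blast
        show "\<forall>u\<in>X. \<forall>v\<in>X. E u v \<longrightarrow> a u < b v \<and> a v < b u" using Eab X(1) by blast
        show "\<forall>W m. W \<subseteq> X \<and> (\<forall>u\<in>W. a u \<le> m \<and> m < b u) \<longrightarrow> colourable E W K"
          using hyp X(1) by blast
      qed
      then obtain k where k: "colourable E X k" "real k \<le> (if X = {} then 0 else K * (1 + log 2 (card X)))"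
        by blast
      have lg0: "0 \<le> log 2 (real n)" using n1 by simp
      show ?thesis
      proof (cases "X = {}")
        case True
        then have "real k \<le> 0" using k(2) by simp
        moreover have "0 \<le> real K * log 2 n" using lg0 by simp
        ultimately show ?thesis using k(1) by (meson order_trans)
      next
        case False
        then have cpos: "card X > 0" using finX by (simp add: card_gt_0_iff)
        have "real (2 * card X) \<le> real n" using X(2) unfolding n_def by (simp only: of_nat_le_iff)
        then have "real (card X) \<le> real n / 2" by simp
        then have "log 2 (card X) \<le> log 2 (real n / 2)" using cpos by simp
        also have "\<dots> = log 2 n - 1" using n1 by (simp add: log_divide)
        finally have "1 + log 2 (card X) \<le> log 2 n" by simp
        then have "K * (1 + log 2 (card X)) \<le> K * log 2 n" by (simp add: mult_left_mono)
        then show ?thesis using k False by auto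
      qed
    qed
    obtain kL where kL: "colourable E L kL" "real kL \<le> K * log 2 n"
      using bound[of L] m(1) unfolding L_def by auto
    obtain kR where kR: "colourable E R kR" "real kR \<le> K * log 2 n"
      using bound[of R] m(2) unfolding R_def by auto
    define k0 where "k0 = max kL kR"
    have "colourable E L k0" using colourable_mono_k[OF kL(1)] unfolding k0_def by simp
    moreover have "colourable E R k0" using colourable_mono_k[OF kR(1)] unfolding k0_def by simp
    moreover have "\<And>u v. u \<in> L \<Longrightarrow> v \<in> R \<Longrightarrow> \<not> E u v \<and> \<not> E v u"
    proof -
      fix u v assume uv: "u \<in> L" "v \<in> R"
      then have "b u \<le> m" "m < a v" "u \<in> V" "v \<in> V" unfolding L_def R_def by auto
      then have nn: "\<not> a v < b u" by simp
      have "\<not> E u v" using Eab \<open>u \<in> V\<close> \<open>v \<in> V\<close> nn by blast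
      moreover have "\<not> E v u" using Eab \<open>u \<in> V\<close> \<open>v \<in> V\<close> nn by blast
      ultimately show "\<not> E u v \<and> \<not> E v u" by simp
    qed
    ultimately have cLR: "colourable E (L \<union> R) k0" by (rule colourable_sep)
    have "M \<subseteq> V \<and> (\<forall>u\<in>M. a u \<le> m \<and> m < b u)" unfolding M_def by auto
    then have cM: "colourable E M K" using hyp by blast
    have "colourable E V (K + k0)" using colourable_union[OF cM cLR] VLRM by simp
    moreover have "real (K + k0) \<le> K * (1 + log 2 (card V))"
    proof -
      have "real k0 \<le> K * log 2 n" using kL(2) kR(2) unfolding k0_def by (simp add: max_def)
      then show ?thesis unfolding n_def by (simp add: algebra_simps)
    qed
    ultimately show ?thesis using False by auto
  qed
qed

definition ppo :: "('a \<Rightarrow> 'a \<Rightarrow> bool) \<Rightarrow> 'a set \<Rightarrow> bool" where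
  "ppo P V \<longleftrightarrow> (\<forall>u\<in>V. \<forall>v\<in>V. P u v) \<or>
     ((\<forall>u\<in>V. \<not> P u u) \<and> (\<forall>u\<in>V. \<forall>v\<in>V. \<forall>w\<in>V. P u v \<longrightarrow> P v w \<longrightarrow> P u w))"

definition Rel :: "('a \<Rightarrow> 'a \<Rightarrow> bool) \<Rightarrow> (('a \<Rightarrow> real) \<times> ('a \<Rightarrow> real)) list \<Rightarrow> 'a \<Rightarrow> 'a \<Rightarrow> bool" where
  "Rel P fs u v \<longleftrightarrow> P u v \<and> (\<forall>ab\<in>set fs. fst ab u < snd ab v)"

lemma Rel_nil: "Rel P [] = P" by (simp add: Rel_def fun_eq_iff)

lemma Rel_cons: "Rel P ((a,b) # fs) = Rel (\<lambda>u v. P u v \<and> a u < b v) fs"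
  by (auto simp: Rel_def fun_eq_iff)

lemma ppo_sub: "ppo P V \<Longrightarrow> W \<subseteq> V \<Longrightarrow> ppo P W"
  unfolding ppo_def by (simp add: subset_iff) blast

lemma ppo_strict:
  assumes "ppo P V" "\<forall>u\<in>V. \<not> Q u u" "\<forall>u\<in>V. \<forall>v\<in>V. \<forall>w\<in>V. Q u v \<longrightarrow> Q v w \<longrightarrow> Q u w"
  shows "ppo (\<lambda>u v. P u v \<and> Q u v) V"
proof -
  have "(\<forall>u\<in>V. \<not> (P u u \<and> Q u u)) \<and> (\<forall>u\<in>V. \<forall>v\<in>V. \<forall>w\<in>V. (P u v \<and> Q u v) \<longrightarrow> (P v w \<and> Q v w) \<longrightarrow> (P u w \<and> Q u w))"
    using assms unfolding ppo_def by blast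
  then show ?thesis unfolding ppo_def by blast
qed

lemma base_case:
  assumes "finite V" "ppo P V" "cfree (symr P) V s"
  shows "colourable (symr P) V s"
proof -
  consider "\<forall>u\<in>V. \<forall>v\<in>V. P u v" | "(\<forall>u\<in>V. \<not> P u u)" "(\<forall>u\<in>V. \<forall>v\<in>V. \<forall>w\<in>V. P u v \<longrightarrow> P v w \<longrightarrow> P u w)"
    using assms(2) unfolding ppo_def by blast
  then show ?thesis
  proof cases
    case 1
    have "is_clique (symr P) V" using 1 unfolding is_clique_def symr_def by blast
    moreover have "\<forall>u\<in>V. \<not> symr P u u" unfolding symr_def by simp
    ultimately show ?thesis using complete_col assms(1,3) by blast
  next
    case 2
    then show ?thesis using mirsky assms(1,3) by blast
  qed
qed

lemma X_mono:
  assumes "card W \<le> card V"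
  shows "real s * (1 + log 2 (real (card W) + 1)) \<le> real s * (1 + log 2 (real (card V) + 1))"
proof -
  have "log 2 (real (card W) + 1) \<le> log 2 (real (card V) + 1)"
    using assms by simp
  then show ?thesis by (simp add: mult_left_mono)
qed

lemma X_ge1:
  assumes "s \<ge> 1"
  shows "1 \<le> real s * (1 + log 2 (real n + 1))"
proof -
  have "0 \<le> log 2 (real n + 1)" by simp
  then have "1 \<le> 1 + log 2 (real n + 1)" by simp
  moreover have "1 \<le> real s" using assms by simp
  ultimately have "1 * 1 \<le> real s * (1 + log 2 (real n + 1))" by (intro mult_mono) simp_all
  then show ?thesis by simp
qed

lemma main:
  "\<exists>c e. c \<ge> 1 \<and> e \<ge> (1::nat) \<and> (\<forall>(V::'a set) P fs s. finite V \<and> length fs = k \<and> ppo P V \<and>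
      cfree (symr (Rel P fs)) V s \<longrightarrow>
      (\<exists>K. colourable (symr (Rel P fs)) V K \<and>
           real K \<le> c * (real s * (1 + log 2 (real (card V) + 1))) ^ e))"
proof (induction k)
  case 0
  show ?case
  proof (rule exI[of _ 1], rule exI[of _ 1], intro conjI allI impI)
    fix V :: "'a set" and P fs s
    assume as: "finite V \<and> length fs = 0 \<and> ppo P V \<and> cfree (symr (Rel P fs)) V s"
    then have "fs = []" by simp
    then have c: "colourable (symr (Rel P fs)) V s" using base_case as Rel_nil by metis
    have "s \<ge> 1" using as cfree_pos by blast
    then have "real s \<le> 1 * (real s * (1 + log 2 (real (card V) + 1))) ^ 1"
      using X_ge1[of s "card V"] by (simp add: mult_le_cancel_left1)
    then show "\<exists>K. colourable (symr (Rel P fs)) V K \<and>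
           real K \<le> 1 * (real s * (1 + log 2 (real (card V) + 1))) ^ 1" using c by blast
  qed simp_all
next
  case (Suc k)
  then obtain c e where ce: "c \<ge> 1" "e \<ge> (1::nat)"
    and IH: "\<And>(V::'a set) P fs s. finite V \<Longrightarrow> length fs = k \<Longrightarrow> ppo P V \<Longrightarrow>
      cfree (symr (Rel P fs)) V s \<Longrightarrow>
      (\<exists>K. colourable (symr (Rel P fs)) V K \<and>
           real K \<le> c * (real s * (1 + log 2 (real (card V) + 1))) ^ e)" by blast
  show ?case
  proof (rule exI[of _ "c + c^2"], rule exI[of _ "2 * e + 1"], intro conjI allI impI)
    have "0 \<le> c^2" by simp
    then show "c + c^2 \<ge> 1" using ce by linarith
    show "2 * e + 1 \<ge> (1::nat)" by simp
    fix V :: "'a set" and P fs s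
    assume as: "finite V \<and> length fs = Suc k \<and> ppo P V \<and> cfree (symr (Rel P fs)) V s"
    then have fin: "finite V" and ppoV: "ppo P V" and cf: "cfree (symr (Rel P fs)) V s" by auto
    obtain a b fs' where fs: "fs = (a, b) # fs'" and lfs': "length fs' = k"
      using as by (cases fs) auto
    define E where "E = symr (Rel P fs)"
    define X where "X = real s * (1 + log 2 (real (card V) + 1))"
    define B where "B = c * X ^ e"
    have s1: "s \<ge> 1" using cf cfree_pos by blast
    have X1: "X \<ge> 1" unfolding X_def using X_ge1[OF s1] by simp
    have B0: "B \<ge> 0" unfolding B_def using ce X1 by simp
    have IHW: "\<exists>K. colourable (symr (Rel Q fs')) W K \<and> real K \<le> B"
      if W: "W \<subseteq> V" "ppo Q W" "cfree (symr (Rel Q fs')) W s" for W Q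
    proof -
      have finW: "finite W" using W(1) fin by (rule finite_subset)
      obtain K where K: "colourable (symr (Rel Q fs')) W K"
        "real K \<le> c * (real s * (1 + log 2 (real (card W) + 1))) ^ e"
        using IH[OF finW lfs' W(2) W(3)] by blast
      have "card W \<le> card V" using W(1) fin by (simp add: card_mono)
      then have "real s * (1 + log 2 (real (card W) + 1)) \<le> X" unfolding X_def by (rule X_mono)
      moreover have "0 \<le> real s * (1 + log 2 (real (card W) + 1))" using X_ge1[OF s1, of "card W"] by simp
      ultimately have "(real s * (1 + log 2 (real (card W) + 1))) ^ e \<le> X ^ e" by (rule power_mono)
      then have "c * (real s * (1 + log 2 (real (card W) + 1))) ^ e \<le> B" unfolding B_def using ce
        by (simp add: mult_left_mono)
      then show ?thesis using K by auto
    qed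
    define Vb where "Vb = {u\<in>V. b u \<le> a u}"
    define Vf where "Vf = {u\<in>V. a u < b u}"
    have VV: "V = Vb \<union> Vf" unfolding Vb_def Vf_def by auto
    define P1 where "P1 = (\<lambda>u v. P u v \<and> a u < b v)"
    have RP1: "Rel P1 fs' = Rel P fs" unfolding P1_def fs by (rule Rel_cons[symmetric])
    have ppo1: "ppo P1 Vb" unfolding P1_def
    proof (rule ppo_strict)
      show "ppo P Vb" using ppoV by (rule ppo_sub) (auto simp: Vb_def)
      show "\<forall>u\<in>Vb. \<not> a u < b u" unfolding Vb_def by auto
      show "\<forall>u\<in>Vb. \<forall>v\<in>Vb. \<forall>w\<in>Vb. a u < b v \<longrightarrow> a v < b w \<longrightarrow> a u < b w"
        unfolding Vb_def by auto
    qed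
    have VbV: "Vb \<subseteq> V" unfolding Vb_def by auto
    have cfb: "cfree (symr (Rel P1 fs')) Vb s" unfolding RP1
      using VbV by (rule cfree_sub[OF cf]) simp
    obtain Kb where Kb: "colourable E Vb Kb" "real Kb \<le> B"
      using IHW[OF VbV ppo1 cfb] unfolding E_def RP1 by blast
    define P2 where "P2 = (\<lambda>u v. P u v \<and> b u \<le> a v)"
    have ppo2: "ppo P2 Vf" unfolding P2_def
    proof (rule ppo_strict)
      show "ppo P Vf" using ppoV by (rule ppo_sub) (auto simp: Vf_def)
      show "\<forall>u\<in>Vf. \<not> b u \<le> a u" unfolding Vf_def by auto
      show "\<forall>u\<in>Vf. \<forall>v\<in>Vf. \<forall>w\<in>Vf. b u \<le> a v \<longrightarrow> b v \<le> a w \<longrightarrow> b u \<le> a w"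
        unfolding Vf_def by auto
    qed
    have R2: "Rel P fs u v" if "u \<in> Vf" "v \<in> Vf" "Rel P2 fs' u v" for u v
      using that unfolding Vf_def P2_def Rel_def fs by auto
    have cf2: "cfree (symr (Rel P2 fs')) Vf s"
    proof (rule cfree_sub[OF cf])
      show "Vf \<subseteq> V" unfolding Vf_def by auto
      fix u v assume "u \<in> Vf" "v \<in> Vf" "symr (Rel P2 fs') u v"
      then show "symr (Rel P fs) u v" using R2 unfolding symr_def by blast
    qed
    have VfV: "Vf \<subseteq> V" unfolding Vf_def by auto
    obtain K2 where K2: "colourable (symr (Rel P2 fs')) Vf K2" "real K2 \<le> B"
      using IHW[OF VfV ppo2 cf2] by blast
    define G1 where "G1 = (\<lambda>u v. symr (Rel P fs') u v \<and> a u < b v \<and> a v < b u)"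
    define KK where "KK = nat \<lfloor>B\<rfloor>"
    have KKB: "real KK \<le> B" unfolding KK_def using B0 by simp
    have hypW: "\<forall>W m. W \<subseteq> Vf \<and> (\<forall>u\<in>W. a u \<le> m \<and> m < b u) \<longrightarrow> colourable G1 W KK"
    proof (intro allI impI)
      fix W m assume W: "W \<subseteq> Vf \<and> (\<forall>u\<in>W. a u \<le> m \<and> m < b u)"
      have WV: "W \<subseteq> V" using W unfolding Vf_def by auto
      have ppoW: "ppo P W" using ppoV WV by (rule ppo_sub)
      have cfW: "cfree (symr (Rel P fs')) W s"
      proof (rule cfree_sub[OF cf WV])
        fix u v assume uv: "u \<in> W" "v \<in> W" "symr (Rel P fs') u v"
        then have "a u < b v" "a v < b u" using W by (meson le_less_trans)+
        then show "symr (Rel P fs) u v" using uv(3) unfolding symr_def Rel_def fs by auto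
      qed
      obtain KW where KW: "colourable (symr (Rel P fs')) W KW" "real KW \<le> B"
        using IHW[OF WV ppoW cfW] by blast
      have "KW \<le> KK" unfolding KK_def using KW(2) by linarith
      then have "colourable (symr (Rel P fs')) W KK" using colourable_mono_k[OF KW(1)] by simp
      then show "colourable G1 W KK" by (rule colourable_sub) (auto simp: G1_def)
    qed
    have finVf: "finite Vf" using fin unfolding Vf_def by simp
    obtain k1 where k1: "colourable G1 Vf k1"
      "real k1 \<le> (if Vf = {} then 0 else KK * (1 + log 2 (card Vf)))"
      using dc[OF finVf _ _ hypW] unfolding Vf_def G1_def by auto
    have k1B: "real k1 \<le> B * X"
    proof (cases "Vf = {}")
      case True then show ?thesis using k1(2) B0 X1 by simp
    next
      case False
      then have cpos: "card Vf > 0" using finVf by (simp add: card_gt_0_iff)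
      have "card Vf \<le> card V" using fin unfolding Vf_def by (simp add: card_mono)
      then have "log 2 (card Vf) \<le> log 2 (real (card V) + 1)" using cpos by simp
      then have "1 + log 2 (card Vf) \<le> 1 + log 2 (real (card V) + 1)" by simp
      also have "\<dots> \<le> X" unfolding X_def using s1
        by (metis X_def X_ge1 dual_order.trans le_add_same_cancel1 less_eq_real_def mult_le_cancel_right1 of_nat_1 of_nat_mono zero_le_one)
      finally have l: "1 + log 2 (card Vf) \<le> X" .
      have "0 \<le> 1 + log 2 (card Vf)" using cpos by simp
      then have "KK * (1 + log 2 (card Vf)) \<le> B * X" using KKB l B0 by (simp add: mult_mono)
      then show ?thesis using k1(2) False by simp
    qed
    have cVf: "colourable E Vf (k1 * K2)"
    proof (rule colourable_prod[OF k1(1) K2(1)])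
      fix u v assume uv: "u \<in> Vf" "v \<in> Vf" "E u v"
      then have ab: "a u < b u" "a v < b v" unfolding Vf_def by auto
      show "G1 u v \<or> symr (Rel P2 fs') u v"
      proof (cases "a u < b v \<and> a v < b u")
        case True
        then have "symr (Rel P fs') u v" using uv(3) unfolding E_def symr_def Rel_def fs by auto
        then show ?thesis using True unfolding G1_def by simp
      next
        case False
        then have "Rel P2 fs' u v \<or> Rel P2 fs' v u" using uv(3) ab unfolding E_def symr_def Rel_def fs P2_def by auto
        then show ?thesis using uv(3) unfolding E_def symr_def by blast
      qed
    qed
    have "colourable E V (Kb + k1 * K2)" using colourable_union[OF Kb(1) cVf] VV by simp
    moreover have "real (Kb + k1 * K2) \<le> (c + c^2) * X ^ (2 * e + 1)"
    proof -
      have "real (k1 * K2) \<le> (B * X) * B" using k1B K2(2) by (simp add: mult_mono B0 X1)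
      also have "\<dots> = c^2 * X ^ (2 * e + 1)"
      proof -
        have pw: "X ^ (2 * e + 1) = X ^ e * X ^ e * X" by (simp add: mult_2 power_add)
        show ?thesis unfolding B_def pw by (simp add: power2_eq_square algebra_simps)
      qed
      finally have p: "real (k1 * K2) \<le> c^2 * X ^ (2 * e + 1)" .
      have "X ^ e \<le> X ^ (2 * e + 1)" using X1 by (intro power_increasing) simp_all
      then have "B \<le> c * X ^ (2 * e + 1)" unfolding B_def using ce by (simp add: mult_left_mono)
      then show ?thesis using p Kb(2) by (simp add: algebra_simps)
    qed
    ultimately show "\<exists>K. colourable (symr (Rel P fs)) V K \<and>
           real K \<le> (c + c^2) * (real s * (1 + log 2 (real (card V) + 1))) ^ (2 * e + 1)"
      unfolding E_def X_def by blast
  qed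
qed

lemma log_bound:
  assumes "(n::nat) \<ge> 2"
  shows "1 + log 2 (real n + 1) \<le> (3 / ln 2) * ln (real n)"
proof -
  have n2: "real n \<ge> 2" using assms by simp
  have "2 * real n \<le> real n * real n" using n2 by (intro mult_right_mono) simp_all
  then have "real n + 1 \<le> real n * real n" using n2 by linarith
  then have "log 2 (real n + 1) \<le> log 2 (real n * real n)" using n2 by simp
  also have "\<dots> = 2 * log 2 (real n)" using n2 by (simp add: log_mult)
  finally have a: "log 2 (real n + 1) \<le> 2 * log 2 (real n)" .
  have "log 2 2 \<le> log 2 (real n)" using n2 by simp
  then have b: "1 \<le> log 2 (real n)" by simp
  have "1 + log 2 (real n + 1) \<le> 3 * log 2 (real n)" using a b by simp
  also have "\<dots> = (3 / ln 2) * ln (real n)" unfolding log_def by simp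
  finally show ?thesis .
qed

theorem theorem3p1:
  "\<exists>\<alpha> \<beta> \<gamma> :: real. \<alpha> > 0 \<and> \<beta> > 0 \<and> \<gamma> > 0 \<and>
     (\<forall>(V :: ((real^'t) \<times> (real^'t)) set) (s :: nat).
        finite V \<and> s \<ge> 1 \<and> card V \<ge> 2 \<and>
        \<not> (\<exists>K\<subseteq>V. card K = s \<and> is_clique qc_adj K) \<longrightarrow>
        real (chromatic_number qc_adj V) \<le> \<alpha> * real s powr \<beta> * ln (real (card V)) powr \<gamma>)"
proof -
  obtain xs :: "'t list" where xs: "set xs = UNIV" using finite_list[of "UNIV :: 't set"] by auto
  define fs :: "((((real^'t) \<times> (real^'t)) \<Rightarrow> real) \<times> (((real^'t) \<times> (real^'t)) \<Rightarrow> real)) list"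
    where "fs = map (\<lambda>i. ((\<lambda>u. fst u $ i), (\<lambda>u. snd u $ i))) xs"
  obtain c e where ce: "c \<ge> 1" "e \<ge> (1::nat)"
    and M: "\<forall>(V::((real^'t) \<times> (real^'t)) set) P fs' s. finite V \<and> length fs' = length fs \<and> ppo P V \<and>
      cfree (symr (Rel P fs')) V s \<longrightarrow>
      (\<exists>K. colourable (symr (Rel P fs')) V K \<and>
           real K \<le> c * (real s * (1 + log 2 (real (card V) + 1))) ^ e)"
    using main[of "length fs"] by blast
  have Q: "symr (Rel (\<lambda>u v. True) fs) = qc_adj"
    unfolding fun_eq_iff symr_def Rel_def qc_adj_def vprec_def fs_def using xs by auto
  define \<alpha> where "\<alpha> = c * (3 / ln 2) ^ e"
  have ln2: "ln (2::real) > 0" by simp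
  show ?thesis
  proof (rule exI[of _ \<alpha>], rule exI[of _ "real e"], rule exI[of _ "real e"], intro conjI allI impI)
    show "\<alpha> > 0" unfolding \<alpha>_def using ce ln2 by simp
    show "real e > 0" using ce by simp
    show "real e > 0" using ce by simp
    fix V :: "((real^'t) \<times> (real^'t)) set" and s :: nat
    assume as: "finite V \<and> s \<ge> 1 \<and> card V \<ge> 2 \<and> \<not> (\<exists>K\<subseteq>V. card K = s \<and> is_clique qc_adj K)"
    have fin: "finite V" and s1: "s \<ge> 1" and n2: "card V \<ge> 2" using as by auto
    have cf: "cfree (symr (Rel (\<lambda>u v. True) fs)) V s" unfolding Q cfree_def using as by blast
    have pp: "ppo (\<lambda>u v. True) V" unfolding ppo_def by simp
    have "\<exists>K. colourable (symr (Rel (\<lambda>u v. True) fs)) V K \<and>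
           real K \<le> c * (real s * (1 + log 2 (real (card V) + 1))) ^ e"
      using M[rule_format, of V fs "\<lambda>u v. True" s] fin pp cf by simp
    then obtain K where K: "colourable qc_adj V K"
        "real K \<le> c * (real s * (1 + log 2 (real (card V) + 1))) ^ e"
      unfolding Q by blast
    have "chromatic_number qc_adj V \<le> K"
      using K(1) unfolding chromatic_number_def colourable_def by (rule Least_le)
    then have chi: "real (chromatic_number qc_adj V) \<le> real K" by simp
    define l where "l = ln (real (card V))"
    have lpos: "l > 0" unfolding l_def using n2 by simp
    have X0: "0 \<le> real s * (1 + log 2 (real (card V) + 1))" using X_ge1[OF s1, of "card V"] by simp
    have "real s * (1 + log 2 (real (card V) + 1)) \<le> real s * ((3 / ln 2) * l)"
      unfolding l_def by (rule mult_left_mono[OF log_bound[OF n2]]) simp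
    then have "(real s * (1 + log 2 (real (card V) + 1))) ^ e \<le> (real s * ((3 / ln 2) * l)) ^ e"
      using X0 by (rule power_mono)
    also have "\<dots> = ((3 / ln 2) * real s * l) ^ e" by (simp only: ac_simps)
    also have "\<dots> = (3 / ln 2) ^ e * real s ^ e * l ^ e" by (simp only: power_mult_distrib)
    finally have "c * (real s * (1 + log 2 (real (card V) + 1))) ^ e \<le> c * ((3 / ln 2) ^ e * real s ^ e * l ^ e)"
      using ce by (simp add: mult_left_mono)
    also have "\<dots> = \<alpha> * real s powr real e * l powr real e"
      unfolding \<alpha>_def using s1 lpos by (simp add: powr_realpow)
    finally show "real (chromatic_number qc_adj V) \<le> \<alpha> * real s powr real e * ln (real (card V)) powr real e"
      using chi K(2) unfolding l_def by linarith
  qed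
qed

end
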